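(* Let $D$ be an integral domain, $T$ a flat overring of $D$, and $\Lambda$ a complete family of flat overrings of $T$. If $\mathrm{Int}(D)S=\mathrm{Int}(S)$ for every $S\in\Lambda$, then $\mathrm{Int}(D)T=\mathrm{Int}(T)$.
   Context: $K$ is the quotient field of $D$; an overring of a domain $R$ is a ring between $R$ and $K$, flat if flat as an $R$-module. $\Lambda$ is complete (over $T$) if every ideal $I$ of $T$ satisfies $I=\bigcap_{S\in\Lambda}IS$. $\mathrm{Int}(A)=\{f\in K[X]\mid f(A)\subseteq A\}$; $\mathrm{Int}(D)S$ is the subring of $K[X]$ of finite sums $\sum f_is_i$ with $f_i\in\mathrm{Int}(D)$, $s_i\in S$. *)

theory Defs
  imports "HOL-Computational_Algebra.Polynomial"
begin

text \<open>All rings live inside a fixed field 'k, which plays the role of K,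
the quotient field of D.\<close>

definition is_subring :: "'k::field set \<Rightarrow> bool" where
  "is_subring R \<longleftrightarrow> 0 \<in> R \<and> 1 \<in> R \<and>
     (\<forall>x\<in>R. \<forall>y\<in>R. x + y \<in> R \<and> x - y \<in> R \<and> x * y \<in> R)"

definition quotient_field_of :: "'k::field set \<Rightarrow> bool" where
  "quotient_field_of D \<longleftrightarrow> is_subring D \<and>
     (\<forall>x. \<exists>a\<in>D. \<exists>b\<in>D. b \<noteq> 0 \<and> x = a / b)"

definition overring :: "'k::field set \<Rightarrow> 'k set \<Rightarrow> bool" where
  "overring R S \<longleftrightarrow> is_subring S \<and> R \<subseteq> S"

text \<open>Flatness of an R-submodule M of K as an R-module, via the equational
  criterion of flatness (every finite relation is trivial).\<close>
definition flat_module :: "'k::field set \<Rightarrow> 'k set \<Rightarrow> bool" where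
  "flat_module R M \<longleftrightarrow>
     (\<forall>(n::nat) (r::nat \<Rightarrow> 'k) m.
        (\<forall>i<n. r i \<in> R \<and> m i \<in> M) \<and> (\<Sum>i<n. r i * m i) = 0 \<longrightarrow>
        (\<exists>(k::nat) (a::nat \<Rightarrow> nat \<Rightarrow> 'k) m'.
            (\<forall>j<k. m' j \<in> M) \<and> (\<forall>i<n. \<forall>j<k. a i j \<in> R) \<and>
            (\<forall>i<n. m i = (\<Sum>j<k. a i j * m' j)) \<and>
            (\<forall>j<k. (\<Sum>i<n. r i * a i j) = 0)))"

definition flat_overring :: "'k::field set \<Rightarrow> 'k set \<Rightarrow> bool" where
  "flat_overring R S \<longleftrightarrow> overring R S \<and> flat_module R S"

definition is_ideal :: "'k::field set \<Rightarrow> 'k set \<Rightarrow> bool" where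
  "is_ideal I T \<longleftrightarrow> I \<subseteq> T \<and> 0 \<in> I \<and>
     (\<forall>x\<in>I. \<forall>y\<in>I. x + y \<in> I) \<and> (\<forall>t\<in>T. \<forall>x\<in>I. t * x \<in> I)"

definition ext_ideal :: "'k::field set \<Rightarrow> 'k set \<Rightarrow> 'k set" where
  "ext_ideal I S = {x. \<exists>(n::nat) a s. (\<forall>i<n. a i \<in> I \<and> s i \<in> S) \<and>
                        x = (\<Sum>i<n. a i * s i)}"

definition complete_family :: "'k::field set set \<Rightarrow> 'k set \<Rightarrow> bool" where
  "complete_family \<Lambda> T \<longleftrightarrow>
     (\<forall>I. is_ideal I T \<longrightarrow> I = (\<Inter>S\<in>\<Lambda>. ext_ideal I S))"

definition IntPoly :: "'k::field set \<Rightarrow> 'k poly set" where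
  "IntPoly A = {f. \<forall>a\<in>A. poly f a \<in> A}"

definition IntPoly_ext :: "'k::field set \<Rightarrow> 'k set \<Rightarrow> 'k poly set" where
  "IntPoly_ext D S = {p. \<exists>(n::nat) f s. (\<forall>i<n. f i \<in> IntPoly D \<and> s i \<in> S) \<and>
                          p = (\<Sum>i<n. smult (s i) (f i))}"

end

theory Submission
  imports Defs
begin

lemma subring_sum:
  fixes n :: nat
  assumes "is_subring R" "\<forall>i<n. g i \<in> R"
  shows "(\<Sum>i<n. g i) \<in> R"
  using assms(2)
proof (induction n)
  case 0 then show ?case using assms(1) by (simp add: is_subring_def)
next
  case (Suc n) then show ?case using assms(1) by (simp add: is_subring_def)
qed

lemma subring_pow:
  assumes "is_subring R" "x \<in> R"
  shows "x ^ n \<in> R"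
proof (induction n)
  case 0 then show ?case using assms by (simp add: is_subring_def)
next
  case (Suc n) then show ?case using assms by (simp add: is_subring_def)
qed

lemma subring_of_nat:
  assumes "is_subring R"
  shows "of_nat n \<in> R"
proof (induction n)
  case 0 then show ?case using assms by (simp add: is_subring_def)
next
  case (Suc n) then show ?case using assms by (simp add: is_subring_def)
qed

lemma subring_setsum:
  assumes "finite A" "\<forall>x y. x \<in> J \<longrightarrow> y \<in> J \<longrightarrow> x + y \<in> J" "0 \<in> J"
    "\<forall>i\<in>A. g i \<in> J"
  shows "sum g A \<in> J"
  using assms(1,4)
proof (induction A rule: finite_induct)
  case empty then show ?case using assms(3) by simp
next
  case (insert x F) then show ?case using assms(2) by simp
qed

lemma qdiff:
  fixes s :: "'k::field"
  assumes sub: "\<forall>x\<in>M. \<forall>y\<in>M. x - y \<in> M"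
    and mul: "\<forall>x\<in>M. s * x \<in> M"
    and dv: "\<forall>x. s * x \<in> M \<longrightarrow> x \<in> M"
  shows "\<forall>p. degree p \<le> n \<longrightarrow> (\<forall>k\<in>{1..n+1}. poly p (s^k * z) \<in> M) \<longrightarrow> poly p z \<in> M"
proof (induction n)
  case 0
  show ?case
  proof (intro allI impI)
    fix p :: "'k poly"
    assume "degree p \<le> 0" and h: "\<forall>k\<in>{1..0+1}. poly p (s^k * z) \<in> M"
    then obtain a where "p = [:a:]" by (metis degree_eq_zeroE le_zero_eq)
    then have "poly p z = poly p (s^1 * z)" by simp
    then show "poly p z \<in> M" using h by simp
  qed
next
  case (Suc n)
  show ?case
  proof (intro allI impI)
    fix p :: "'k poly"
    assume dp: "degree p \<le> Suc n" and h: "\<forall>k\<in>{1..Suc n+1}. poly p (s^k * z) \<in> M"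
    define q where "q = pcompose p [:0, s:] - smult (s ^ Suc n) p"
    have cq: "coeff q i = s ^ i * coeff p i - s ^ Suc n * coeff p i" for i
      unfolding q_def by (simp add: coeff_pcompose_linear)
    have "degree q \<le> n"
    proof (rule degree_le, intro allI impI)
      fix i assume "n < i"
      show "coeff q i = 0"
      proof (cases "i = Suc n")
        case True then show ?thesis using cq by simp
      next
        case False
        then have "i > degree p" using dp \<open>n < i\<close> by simp
        then have "coeff p i = 0" using coeff_eq_0 by blast
        then show ?thesis using cq by simp
      qed
    qed
    have pq: "poly q y = poly p (s * y) - s ^ Suc n * poly p y" for y
      unfolding q_def by (simp add: poly_pcompose mult.commute)
    have "\<forall>k\<in>{1..n+1}. poly q (s^k * z) \<in> M"
    proof
      fix k assume k: "k \<in> {1..n+1}"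
      have a: "poly p (s^(Suc k) * z) \<in> M" using h[rule_format, of "Suc k"] k by simp
      have b0: "poly p (s^k * z) \<in> M" using h k by auto
      have b: "s ^ m * poly p (s^k * z) \<in> M" for m
      proof (induction m)
        case 0 then show ?case using b0 by simp
      next
        case (Suc m)
        then have "s * (s ^ m * poly p (s^k * z)) \<in> M" using mul by blast
        then show ?case by (simp add: mult.assoc)
      qed
      have eqq: "poly q (s^k * z) = poly p (s^(Suc k) * z) - s ^ Suc n * poly p (s^k * z)"
        using pq by (simp add: mult.assoc)
      show "poly q (s^k * z) \<in> M" using a b[of "Suc n"] sub eqq by metis
    qed
    then have qz: "poly q z \<in> M" using Suc.IH \<open>degree q \<le> n\<close> by blast
    have pz: "poly p (s * z) \<in> M" using h[rule_format, of 1] by simp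
    have eq2: "poly p (s*z) - poly q z = s ^ Suc n * poly p z"
      using pq[of z] by (simp only: diff_diff_eq2 diff_self) simp
    have e: "s ^ Suc n * poly p z \<in> M" using sub qz pz eq2 by metis
    have "s ^ m * poly p z \<in> M \<Longrightarrow> poly p z \<in> M" for m
    proof (induction m)
      case 0 then show ?case by simp
    next
      case (Suc m)
      then have "s * (s ^ m * poly p z) \<in> M" by (simp add: mult.assoc)
      then show ?case using dv Suc.IH by blast
    qed
    then show "poly p z \<in> M" using e by blast
  qed
qed

lemma ext_idealI:
  fixes n :: nat
  assumes "\<forall>i<n. a i \<in> I \<and> s i \<in> S"
  shows "(\<Sum>i<n. a i * s i) \<in> ext_ideal I S"
  unfolding ext_ideal_def using assms by blast

lemma ext_ideal_add1:
  assumes "x \<in> ext_ideal I S" "a \<in> I" "s \<in> S"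
  shows "x + a * s \<in> ext_ideal I S"
proof -
  obtain n :: nat and a' s' where h: "\<forall>i<n. a' i \<in> I \<and> s' i \<in> S" "x = (\<Sum>i<n. a' i * s' i)"
    using assms(1) unfolding ext_ideal_def by blast
  have c: "(\<Sum>i<n. (a'(n:=a)) i * (s'(n:=s)) i) = (\<Sum>i<n. a' i * s' i)"
    by (rule sum.cong) auto
  have "(\<Sum>i<Suc n. (a'(n:=a)) i * (s'(n:=s)) i) = (\<Sum>i<n. a' i * s' i) + a * s"
    by (simp only: sum.lessThan_Suc c) simp
  moreover have "\<forall>i<Suc n. (a'(n:=a)) i \<in> I \<and> (s'(n:=s)) i \<in> S"
    using h(1) assms(2,3) by (auto simp add: less_Suc_eq)
  ultimately show ?thesis using h(2) ext_idealI[of "Suc n" "a'(n:=a)" I "s'(n:=s)" S] by argo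
qed

lemma ext_ideal_0: "0 \<in> ext_ideal I S"
  unfolding ext_ideal_def by (rule CollectI, rule exI[of _ 0], simp)

lemma ext_ideal_add:
  assumes "x \<in> ext_ideal I S" "y \<in> ext_ideal I S"
  shows "x + y \<in> ext_ideal I S"
proof -
  obtain n :: nat and a s where h: "\<forall>i<n. a i \<in> I \<and> s i \<in> S" "y = (\<Sum>i<n. a i * s i)"
    using assms(2) unfolding ext_ideal_def by blast
  have "\<forall>i<m. a i \<in> I \<and> s i \<in> S \<Longrightarrow> x + (\<Sum>i<m. a i * s i) \<in> ext_ideal I S" for m
  proof (induction m)
    case 0 then show ?case using assms(1) by simp
  next
    case (Suc m)
    then have "x + (\<Sum>i<m. a i * s i) + a m * s m \<in> ext_ideal I S"
      by (intro ext_ideal_add1) auto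
    then show ?case by (simp add: add.assoc)
  qed
  then show ?thesis using h by blast
qed

lemma ext_ideal_sum:
  fixes n :: nat
  assumes "\<forall>i<n. g i \<in> ext_ideal I S"
  shows "(\<Sum>i<n. g i) \<in> ext_ideal I S"
  using assms
proof (induction n)
  case 0 then show ?case by (simp add: ext_ideal_0)
next
  case (Suc n) then show ?case by (simp add: ext_ideal_add)
qed

lemma ext_ideal_mono:
  assumes "I \<subseteq> J" "x \<in> ext_ideal I S"
  shows "x \<in> ext_ideal J S"
  using assms unfolding ext_ideal_def by blast

lemma ext_ideal_prod:
  assumes "x \<in> ext_ideal I S" "y \<in> ext_ideal J S" "is_subring S"
    "\<forall>a\<in>I. \<forall>b\<in>J. a * b \<in> L"
  shows "x * y \<in> ext_ideal L S"
proof -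
  have one: "e * u * y \<in> ext_ideal L S" if "e \<in> I" "u \<in> S" for e u
  proof -
    obtain n :: nat and b v where h: "\<forall>i<n. b i \<in> J \<and> v i \<in> S" "y = (\<Sum>i<n. b i * v i)"
      using assms(2) unfolding ext_ideal_def by blast
    have "e * u * y = (\<Sum>i<n. (e * b i) * (u * v i))"
      using h(2) by (simp add: sum_distrib_left mult_ac)
    moreover have "\<forall>i<n. e * b i \<in> L \<and> u * v i \<in> S"
      using h(1) that assms(3,4) by (simp add: is_subring_def)
    ultimately show ?thesis using ext_idealI[of n "\<lambda>i. e * b i" L "\<lambda>i. u * v i" S] by simp
  qed
  obtain n :: nat and a s where h: "\<forall>i<n. a i \<in> I \<and> s i \<in> S" "x = (\<Sum>i<n. a i * s i)"
    using assms(1) unfolding ext_ideal_def by blast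
  have "x * y = (\<Sum>i<n. a i * s i * y)" using h(2) by (simp add: sum_distrib_right)
  moreover have "\<forall>i<n. a i * s i * y \<in> ext_ideal L S" using h(1) one by blast
  ultimately show ?thesis using ext_ideal_sum[of n "\<lambda>i. a i * s i * y" L S] by simp
qed


lemma smult_sum_right:
  fixes n :: nat
  shows "smult t (\<Sum>i<n. g i) = (\<Sum>i<n. smult t (g i))"
  by (induction n) (simp_all add: smult_add_right)

lemma IntPoly_extI:
  fixes n :: nat
  assumes "\<forall>i<n. f i \<in> IntPoly D \<and> s i \<in> S"
  shows "(\<Sum>i<n. smult (s i) (f i)) \<in> IntPoly_ext D S"
  unfolding IntPoly_ext_def using assms by blast

lemma IntPoly_ext_add1:
  assumes "x \<in> IntPoly_ext D S" "f \<in> IntPoly D" "s \<in> S"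
  shows "x + smult s f \<in> IntPoly_ext D S"
proof -
  obtain n :: nat and f' s' where h: "\<forall>i<n. f' i \<in> IntPoly D \<and> s' i \<in> S" "x = (\<Sum>i<n. smult (s' i) (f' i))"
    using assms(1) unfolding IntPoly_ext_def by blast
  have c: "(\<Sum>i<n. smult ((s'(n:=s)) i) ((f'(n:=f)) i)) = (\<Sum>i<n. smult (s' i) (f' i))"
    by (rule sum.cong) auto
  have "(\<Sum>i<Suc n. smult ((s'(n:=s)) i) ((f'(n:=f)) i)) = (\<Sum>i<n. smult (s' i) (f' i)) + smult s f"
    by (simp only: sum.lessThan_Suc c) simp
  moreover have "\<forall>i<Suc n. (f'(n:=f)) i \<in> IntPoly D \<and> (s'(n:=s)) i \<in> S"
    using h(1) assms(2,3) by (auto simp add: less_Suc_eq)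
  ultimately show ?thesis using h(2) IntPoly_extI[of "Suc n" "f'(n:=f)" D "s'(n:=s)" S] by argo
qed

lemma IntPoly_ext_0: "0 \<in> IntPoly_ext D S"
  using IntPoly_extI[of 0 _ D _ S] by simp

lemma IntPoly_ext_add:
  assumes "x \<in> IntPoly_ext D S" "y \<in> IntPoly_ext D S"
  shows "x + y \<in> IntPoly_ext D S"
proof -
  obtain n :: nat and f s where h: "\<forall>i<n. f i \<in> IntPoly D \<and> s i \<in> S" "y = (\<Sum>i<n. smult (s i) (f i))"
    using assms(2) unfolding IntPoly_ext_def by blast
  have "\<forall>i<m. f i \<in> IntPoly D \<and> s i \<in> S \<Longrightarrow> x + (\<Sum>i<m. smult (s i) (f i)) \<in> IntPoly_ext D S" for m
  proof (induction m)
    case 0 then show ?case using assms(1) by simp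
  next
    case (Suc m)
    then have "x + (\<Sum>i<m. smult (s i) (f i)) + smult (s m) (f m) \<in> IntPoly_ext D S"
      by (intro IntPoly_ext_add1) auto
    then show ?case by (simp add: add.assoc)
  qed
  then show ?thesis using h by blast
qed

lemma IntPoly_ext_smult:
  assumes "x \<in> IntPoly_ext D S" "is_subring S" "t \<in> S"
  shows "smult t x \<in> IntPoly_ext D S"
proof -
  obtain n :: nat and f s where h: "\<forall>i<n. f i \<in> IntPoly D \<and> s i \<in> S" "x = (\<Sum>i<n. smult (s i) (f i))"
    using assms(1) unfolding IntPoly_ext_def by blast
  have "smult t x = (\<Sum>i<n. smult (t * s i) (f i))"
    using h(2) by (simp add: smult_sum_right)
  moreover have "\<forall>i<n. f i \<in> IntPoly D \<and> t * s i \<in> S"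
    using h(1) assms(2,3) by (simp add: is_subring_def)
  ultimately show ?thesis using IntPoly_extI[of n f D "\<lambda>i. t * s i" S] by simp
qed

lemma den:
  assumes "quotient_field_of D" "D \<subseteq> T" "is_subring T" "flat_module T S" "1 \<in> S" "x \<in> S"
  shows "\<exists>(k::nat) c m. (\<forall>j<k. c j \<in> T \<and> c j * x \<in> T \<and> m j \<in> S) \<and> (\<Sum>j<k. c j * m j) = 1"
proof -
  obtain a b where ab: "a \<in> D" "b \<in> D" "b \<noteq> 0" "x = a / b"
    using assms(1) unfolding quotient_field_of_def by blast
  define r where "r = (\<lambda>i::nat. if i = 0 then a else 0 - b)"
  define mm where "mm = (\<lambda>i::nat. if i = 0 then 1 else x)"
  have "0 - b \<in> T" using ab assms(2,3) unfolding is_subring_def by blast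
  then have h1: "\<forall>i<2. r i \<in> T \<and> mm i \<in> S" using ab assms(2,5,6) by (auto simp: r_def mm_def)
  have h2: "(\<Sum>i<2. r i * mm i) = 0" using ab by (simp add: r_def mm_def numeral_2_eq_2)
  have ex: "\<exists>(k::nat) \<alpha> m'. (\<forall>j<k. m' j \<in> S) \<and> (\<forall>i<2. \<forall>j<k. \<alpha> i j \<in> T) \<and>
            (\<forall>i<2. mm i = (\<Sum>j<k. \<alpha> i j * m' j)) \<and>
            (\<forall>j<k. (\<Sum>i<2. r i * \<alpha> i j) = 0)"
    using spec[OF spec[OF spec[OF assms(4)[unfolded flat_module_def], of 2], of r], of mm] h1 h2
    by blast
  obtain k :: nat and \<alpha> m' where
    f: "\<forall>j<k. m' j \<in> S" "\<forall>i<2. \<forall>j<k. \<alpha> i j \<in> T" "\<forall>i<2. mm i = (\<Sum>j<k. \<alpha> i j * m' j)"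
       "\<forall>j<k. (\<Sum>i<2. r i * \<alpha> i j) = 0"
    using ex by blast
  have "\<forall>j<k. \<alpha> 0 j \<in> T \<and> \<alpha> 0 j * x \<in> T \<and> m' j \<in> S"
  proof (intro allI impI conjI)
    fix j assume j: "j < k"
    show "\<alpha> 0 j \<in> T" using f(2) j by simp
    show "m' j \<in> S" using f(1) j by simp
    have "a * \<alpha> 0 j - b * \<alpha> 1 j = 0" using f(4) j by (simp add: r_def numeral_2_eq_2)
    then have e1: "a * \<alpha> 0 j = b * \<alpha> 1 j" by simp
    have bx: "b * x = a" using ab(3,4) by simp
    have "b * (\<alpha> 0 j * x) = a * \<alpha> 0 j" using bx by (metis mult.assoc mult.commute)
    then have "b * (\<alpha> 0 j * x) = b * \<alpha> 1 j" using e1 by simp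
    then have "\<alpha> 1 j = \<alpha> 0 j * x" using ab(3) by simp
    then show "\<alpha> 0 j * x \<in> T" using f(2) j by (metis one_less_numeral_iff semiring_norm(76))
  qed
  moreover have "(\<Sum>j<k. \<alpha> 0 j * m' j) = 1" using f(3)[rule_format, of 0] by (simp add: mm_def)
  ultimately show ?thesis by blast
qed

lemma radical_one:
  fixes k :: nat
  assumes S: "is_subring S" and J: "J \<subseteq> S" "0 \<in> J" "\<forall>x\<in>J. \<forall>y\<in>J. x + y \<in> J"
    "\<forall>s\<in>S. \<forall>x\<in>J. s * x \<in> J"
    and c: "\<forall>j<k. c j \<in> S \<and> m j \<in> S \<and> (\<exists>N. c j ^ N \<in> J)"
    and one: "(\<Sum>j<k. c j * m j) = 1"
  shows "1 \<in> J"
proof -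
  define R where "R = {y \<in> S. \<exists>N. y ^ N \<in> J}"
  have radd: "x + y \<in> R" if xR: "x \<in> R" and yR: "y \<in> R" for x y
  proof -
    obtain a where a: "x \<in> S" "x ^ a \<in> J" using xR R_def by blast
    obtain b where b: "y \<in> S" "y ^ b \<in> J" using yR R_def by blast
    have xy: "x + y \<in> S" using a b S unfolding is_subring_def by blast
    have "(x + y) ^ (a + b) = (\<Sum>i\<le>a+b. of_nat ((a+b) choose i) * x ^ i * y ^ (a + b - i))"
      by (rule binomial_ring)
    moreover have "(\<Sum>i\<le>a+b. of_nat ((a+b) choose i) * x ^ i * y ^ (a + b - i)) \<in> J"
    proof (rule subring_setsum)
      show "finite {..a+b}" by simp
      show "\<forall>x y. x \<in> J \<longrightarrow> y \<in> J \<longrightarrow> x + y \<in> J" using J by blast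
      show "0 \<in> J" using J by blast
      show "\<forall>i\<in>{..a + b}. of_nat (a + b choose i) * x ^ i * y ^ (a + b - i) \<in> J"
      proof
        fix i assume "i \<in> {..a+b}"
        have C: "of_nat (a + b choose i) \<in> S" using subring_of_nat[OF S] by blast
        show "of_nat (a + b choose i) * x ^ i * y ^ (a + b - i) \<in> J"
        proof (cases "a \<le> i")
          case True
          then have "x ^ i = x ^ a * x ^ (i - a)" by (metis le_add_diff_inverse power_add)
          then have "of_nat (a + b choose i) * x ^ i * y ^ (a + b - i) =
              (of_nat (a + b choose i) * x ^ (i - a) * y ^ (a + b - i)) * x ^ a" by (simp add: mult_ac)
          moreover have "of_nat (a + b choose i) * x ^ (i - a) * y ^ (a + b - i) \<in> S"
            using C subring_pow[OF S a(1)] subring_pow[OF S b(1)] S unfolding is_subring_def by blast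
          ultimately show ?thesis using J(4) a(2) by (metis (no_types, lifting))
        next
          case False
          then have "y ^ (a + b - i) = y ^ b * y ^ (a - i)" by (metis add.commute nat_le_linear diff_add_assoc2 power_add)
          then have "of_nat (a + b choose i) * x ^ i * y ^ (a + b - i) =
              (of_nat (a + b choose i) * x ^ i * y ^ (a - i)) * y ^ b" by (simp add: mult_ac)
          moreover have "of_nat (a + b choose i) * x ^ i * y ^ (a - i) \<in> S"
            using C subring_pow[OF S a(1)] subring_pow[OF S b(1)] S unfolding is_subring_def by blast
          ultimately show ?thesis using J(4) b(2) by (metis (no_types, lifting))
        qed
      qed
    qed
    ultimately have "(x + y) ^ (a + b) \<in> J" by simp
    then show ?thesis using xy R_def by blast
  qed
  have rmul: "s * y \<in> R" if yR: "y \<in> R" and sS: "s \<in> S" for y s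
  proof -
    obtain a where a: "y \<in> S" "y ^ a \<in> J" using yR R_def by blast
    have "(s * y) ^ a = s ^ a * y ^ a" by (simp add: power_mult_distrib)
    moreover have "s ^ a \<in> S" using subring_pow[OF S sS] .
    ultimately have "(s * y) ^ a \<in> J" using J(4) a by simp
    moreover have "s * y \<in> S" using a sS S unfolding is_subring_def by blast
    ultimately show ?thesis using R_def by blast
  qed
  have r0: "0 \<in> R" using J S R_def unfolding is_subring_def by (auto intro!: exI[of _ 1])
  have "\<forall>j<k'. c j \<in> S \<and> m j \<in> S \<and> (\<exists>N. c j ^ N \<in> J) \<Longrightarrow> (\<Sum>j<k'. c j * m j) \<in> R" for k'
  proof (induction k')
    case 0 then show ?case using r0 by simp
  next
    case (Suc k')
    then have "c k' \<in> R" "m k' \<in> S" using R_def by auto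
    then have "m k' * c k' \<in> R" using rmul by blast
    then show ?case using Suc radd by (simp add: mult.commute)
  qed
  then have "1 \<in> R" using c one by metis
  then obtain N where "(1::'a) ^ N \<in> J" using R_def by blast
  then show ?thesis by simp
qed


lemma intpoly_flat:
  assumes Q: "quotient_field_of D" and DT: "D \<subseteq> T" and T: "is_subring T" and S: "is_subring S"
    and TS: "T \<subseteq> S" and fl: "flat_module T S" and f: "f \<in> IntPoly T"
  shows "f \<in> IntPoly S"
  unfolding IntPoly_def
proof (intro CollectI ballI)
  fix x assume xS: "x \<in> S"
  have oneS: "1 \<in> S" using S unfolding is_subring_def by blast
  obtain k :: nat and c m where cm: "\<forall>j<k. c j \<in> T \<and> c j * x \<in> T \<and> m j \<in> S" "(\<Sum>j<k. c j * m j) = 1"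
    using den[OF Q DT T fl oneS xS] by blast
  have loc: "\<exists>N. c j ^ N * poly f x \<in> T" if j: "j < k" for j
  proof -
    define cj where "cj = c j"
    have cjT: "cj \<in> T" "cj * x \<in> T" using cm(1) j cj_def by auto
    define M where "M = {y. \<exists>N. cj ^ N * y \<in> T}"
    have powT: "cj ^ N \<in> T" for N using subring_pow[OF T cjT(1)] .
    have sub: "\<forall>u\<in>M. \<forall>v\<in>M. u - v \<in> M"
    proof (intro ballI)
      fix u v assume "u \<in> M" "v \<in> M"
      then obtain N1 N2 where n: "cj ^ N1 * u \<in> T" "cj ^ N2 * v \<in> T" using M_def by blast
      have "cj ^ (N1 + N2) * (u - v) = cj ^ N2 * (cj ^ N1 * u) - cj ^ N1 * (cj ^ N2 * v)"
        by (simp add: power_add algebra_simps)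
      moreover have "cj ^ N2 * (cj ^ N1 * u) - cj ^ N1 * (cj ^ N2 * v) \<in> T"
        using n powT T unfolding is_subring_def by blast
      ultimately have "cj ^ (N1 + N2) * (u - v) \<in> T" by metis
      then show "u - v \<in> M" unfolding M_def by blast
    qed
    have mul: "\<forall>u\<in>M. cj * u \<in> M"
    proof
      fix u assume "u \<in> M"
      then obtain N where n: "cj ^ N * u \<in> T" using M_def by blast
      have "cj ^ N * (cj * u) = cj * (cj ^ N * u)" by (simp add: mult_ac)
      moreover have "cj * (cj ^ N * u) \<in> T" using n cjT T unfolding is_subring_def by blast
      ultimately have "cj ^ N * (cj * u) \<in> T" by metis
      then show "cj * u \<in> M" unfolding M_def by blast
    qed
    have dv: "\<forall>u. cj * u \<in> M \<longrightarrow> u \<in> M"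
    proof (intro allI impI)
      fix u assume "cj * u \<in> M"
      then obtain N where n: "cj ^ N * (cj * u) \<in> T" using M_def by blast
      then have "cj ^ Suc N * u \<in> T" by (simp add: mult_ac)
      then show "u \<in> M" using M_def by blast
    qed
    have pts: "\<forall>i\<in>{1..degree f+1}. poly f (cj ^ i * x) \<in> M"
    proof
      fix i assume i: "i \<in> {1..degree f + 1}"
      then obtain i' where ii: "i = Suc i'" by (cases i) auto
      then have eqi: "cj ^ i * x = cj ^ i' * (cj * x)" by (simp add: mult_ac)
      have "cj ^ i' * (cj * x) \<in> T" using powT cjT T unfolding is_subring_def by blast
      then have "poly f (cj ^ i' * (cj * x)) \<in> T" using f unfolding IntPoly_def by blast
      then have "poly f (cj ^ i * x) \<in> T" unfolding eqi .
      then have "cj ^ 0 * poly f (cj ^ i * x) \<in> T" by simp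
      then show "poly f (cj ^ i * x) \<in> M" using M_def by blast
    qed
    have "degree f \<le> degree f \<longrightarrow> (\<forall>i\<in>{1..degree f+1}. poly f (cj ^ i * x) \<in> M) \<longrightarrow> poly f x \<in> M"
      by (rule spec[OF qdiff[OF sub mul dv, where n="degree f" and z=x]])
    then have "poly f x \<in> M" using pts by blast
    then show ?thesis using M_def cj_def by blast
  qed
  define J where "J = {y \<in> S. y * poly f x \<in> S}"
  have "1 \<in> J"
  proof (rule radical_one[OF S, of J k c m])
    show "J \<subseteq> S" using J_def by blast
    show "0 \<in> J" using J_def S unfolding is_subring_def by simp
    show "\<forall>u\<in>J. \<forall>v\<in>J. u + v \<in> J"
    proof (intro ballI)
      fix u v assume "u \<in> J" "v \<in> J"
      then have "u \<in> S" "v \<in> S" "u * poly f x \<in> S" "v * poly f x \<in> S" using J_def by auto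
      moreover have "(u + v) * poly f x = u * poly f x + v * poly f x" by (simp add: algebra_simps)
      ultimately show "u + v \<in> J" using J_def S unfolding is_subring_def by auto
    qed
    show "\<forall>s\<in>S. \<forall>u\<in>J. s * u \<in> J"
    proof (intro ballI)
      fix s u assume "s \<in> S" "u \<in> J"
      then have "s \<in> S" "u \<in> S" "u * poly f x \<in> S" using J_def by auto
      moreover have "(s * u) * poly f x = s * (u * poly f x)" by (simp add: algebra_simps)
      ultimately have "s * u \<in> S" "(s * u) * poly f x \<in> S" using S unfolding is_subring_def by metis+
      then show "s * u \<in> J" using J_def by blast
    qed
    show "\<forall>j<k. c j \<in> S \<and> m j \<in> S \<and> (\<exists>N. c j ^ N \<in> J)"
    proof (intro allI impI conjI)
      fix j assume j: "j < k"
      show "c j \<in> S" "m j \<in> S" using cm(1) j TS by auto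
      obtain N where "c j ^ N * poly f x \<in> T" using loc j by blast
      moreover have "c j ^ N \<in> T" using subring_pow[OF T] cm(1) j by blast
      ultimately show "\<exists>N. c j ^ N \<in> J" using J_def TS by blast
    qed
    show "(\<Sum>j<k. c j * m j) = 1" using cm(2) .
  qed
  then show "poly f x \<in> S" using J_def by simp
qed


lemma subring_ideal: "is_subring T \<Longrightarrow> is_ideal T T"
  unfolding is_subring_def is_ideal_def by blast

theorem proposition3p7:
  fixes D T :: "'k::field set" and \<Lambda> :: "'k set set"
  assumes "quotient_field_of D"
    and "flat_overring D T"
    and "\<forall>S\<in>\<Lambda>. flat_overring T S"
    and "complete_family \<Lambda> T"
    and "\<forall>S\<in>\<Lambda>. IntPoly_ext D S = IntPoly S"
  shows "IntPoly_ext D T = IntPoly T"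
proof -
  note Q = assms(1)
  have T: "is_subring T" and DT: "D \<subseteq> T"
    using assms(2) unfolding flat_overring_def overring_def by auto
  have L: "is_subring S" "T \<subseteq> S" "flat_module T S" if "S \<in> \<Lambda>" for S
    using assms(3) that unfolding flat_overring_def overring_def by auto
  have C: "I = (\<Inter>S\<in>\<Lambda>. ext_ideal I S)" if "is_ideal I T" for I
    using assms(4) that unfolding complete_family_def by blast
  have EQ: "IntPoly_ext D S = IntPoly S" if "S \<in> \<Lambda>" for S using assms(5) that by blast
  have single: "g \<in> IntPoly_ext D S" if "g \<in> IntPoly D" "1 \<in> S" for g S
    using IntPoly_extI[of 1 "\<lambda>_. g" D "\<lambda>_. 1" S] that by simp
  have IDT: "g \<in> IntPoly T" if g: "g \<in> IntPoly D" for g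
    unfolding IntPoly_def
  proof (intro CollectI ballI)
    fix t assume t: "t \<in> T"
    have "poly g t \<in> ext_ideal T S" if S: "S \<in> \<Lambda>" for S
    proof -
      have "1 \<in> S" using L(1)[OF S] unfolding is_subring_def by blast
      then have "g \<in> IntPoly S" using single[OF g] EQ[OF S] by blast
      moreover have "t \<in> S" using t L(2)[OF S] by blast
      ultimately have "poly g t \<in> S" unfolding IntPoly_def by blast
      moreover have "1 \<in> T" using T unfolding is_subring_def by blast
      ultimately show ?thesis using ext_idealI[of 1 "\<lambda>_. 1" T "\<lambda>_. poly g t" S] by simp
    qed
    then have "poly g t \<in> (\<Inter>S\<in>\<Lambda>. ext_ideal T S)" by blast
    then show "poly g t \<in> T" using C[OF subring_ideal[OF T]] by blast
  qed
  show ?thesis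
  proof
    show "IntPoly_ext D T \<subseteq> IntPoly T"
    proof
      fix p assume "p \<in> IntPoly_ext D T"
      then obtain n :: nat and f s where h: "\<forall>i<n. f i \<in> IntPoly D \<and> s i \<in> T" "p = (\<Sum>i<n. smult (s i) (f i))"
        unfolding IntPoly_ext_def by blast
      show "p \<in> IntPoly T" unfolding IntPoly_def
      proof (intro CollectI ballI)
        fix t assume t: "t \<in> T"
        have "poly p t = (\<Sum>i<n. s i * poly (f i) t)" using h(2) by (simp add: poly_sum)
        moreover have "\<forall>i<n. s i * poly (f i) t \<in> T"
        proof (intro allI impI)
          fix i assume i: "i < n"
          have "f i \<in> IntPoly D" "s i \<in> T" using h(1) i by auto
          then have "f i \<in> IntPoly T" using IDT by blast
          then have "poly (f i) t \<in> T" using t unfolding IntPoly_def by blast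
          then show "s i * poly (f i) t \<in> T" using \<open>s i \<in> T\<close> T unfolding is_subring_def by blast
        qed
        then have "(\<Sum>i<n. s i * poly (f i) t) \<in> T" by (rule subring_sum[OF T])
        ultimately show "poly p t \<in> T" by simp
      qed
    qed
  next
    show "IntPoly T \<subseteq> IntPoly_ext D T"
    proof
      fix p assume p: "p \<in> IntPoly T"
      define I where "I = {t \<in> T. smult t p \<in> IntPoly_ext D T}"
      have idl: "is_ideal I T" unfolding is_ideal_def
      proof (intro conjI ballI)
        show "I \<subseteq> T" using I_def by blast
        show "0 \<in> I" using I_def T IntPoly_ext_0 unfolding is_subring_def by auto
        fix x y assume x: "x \<in> I" and y: "y \<in> I"
        have "smult (x + y) p = smult x p + smult y p" by (simp add: smult_add_left)
        then have "smult (x + y) p \<in> IntPoly_ext D T" using x y I_def IntPoly_ext_add by auto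
        moreover have "x + y \<in> T" using x y I_def T unfolding is_subring_def by blast
        ultimately show "x + y \<in> I" using I_def by blast
      next
        fix t x assume t: "t \<in> T" and x: "x \<in> I"
        have "smult x p \<in> IntPoly_ext D T" using x I_def by blast
        then have "smult t (smult x p) \<in> IntPoly_ext D T" using IntPoly_ext_smult[OF _ T t] by blast
        then have "smult (t * x) p \<in> IntPoly_ext D T" by simp
        moreover have "t * x \<in> T" using x t I_def T unfolding is_subring_def by blast
        ultimately show "t * x \<in> I" using I_def by blast
      qed
      have "1 \<in> ext_ideal I S" if S: "S \<in> \<Lambda>" for S
      proof -
        note SS = L(1)[OF S] and TS = L(2)[OF S] and fl = L(3)[OF S]
        have oneS: "1 \<in> S" using SS unfolding is_subring_def by blast
        have oneT: "1 \<in> T" using T unfolding is_subring_def by blast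
        have "p \<in> IntPoly S" using intpoly_flat[OF Q DT T SS TS fl p] .
        then have "p \<in> IntPoly_ext D S" using EQ[OF S] by blast
        then obtain n :: nat and f s where h: "\<forall>i<n. f i \<in> IntPoly D \<and> s i \<in> S" "p = (\<Sum>i<n. smult (s i) (f i))"
          unfolding IntPoly_ext_def by blast
        have E: "m \<le> n \<Longrightarrow> 1 \<in> ext_ideal {t \<in> T. \<forall>i<m. t * s i \<in> T} S" for m
        proof (induction m)
          case 0
          show ?case using ext_idealI[of 1 "\<lambda>_. 1" "{t \<in> T. \<forall>i<0. t * s i \<in> T}" "\<lambda>_. 1" S] oneT oneS by simp
        next
          case (Suc m)
          then have IH: "1 \<in> ext_ideal {t \<in> T. \<forall>i<m. t * s i \<in> T} S" and mn: "m < n" by auto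
          have "s m \<in> S" using h(1) mn by blast
          then obtain k :: nat and c u where cm: "\<forall>j<k. c j \<in> T \<and> c j * s m \<in> T \<and> u j \<in> S" "(\<Sum>j<k. c j * u j) = 1"
            using den[OF Q DT T fl oneS] by blast
          have "(\<Sum>j<k. c j * u j) \<in> ext_ideal {t \<in> T. t * s m \<in> T} S"
            by (rule ext_idealI) (use cm(1) in blast)
          then have D2: "1 \<in> ext_ideal {t \<in> T. t * s m \<in> T} S" using cm(2) by simp
          have prod: "\<forall>a\<in>{t \<in> T. \<forall>i<m. t * s i \<in> T}. \<forall>b\<in>{t \<in> T. t * s m \<in> T}.
                a * b \<in> {t \<in> T. \<forall>i<Suc m. t * s i \<in> T}"
          proof (intro ballI)
            fix a b assume a: "a \<in> {t \<in> T. \<forall>i<m. t * s i \<in> T}" and b: "b \<in> {t \<in> T. t * s m \<in> T}"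
            have "a * b \<in> T" using a b T unfolding is_subring_def by blast
            moreover have "a * b * s i \<in> T" if i: "i < Suc m" for i
            proof (cases "i = m")
              case True
              have "a * b * s i = a * (b * s m)" using True by (simp add: mult_ac)
              moreover have "a * (b * s m) \<in> T" using a b T unfolding is_subring_def by blast
              ultimately show ?thesis by metis
            next
              case False
              then have "i < m" using i by simp
              have "a * b * s i = (a * s i) * b" by (simp add: mult_ac)
              moreover have "(a * s i) * b \<in> T" using a b T \<open>i < m\<close> unfolding is_subring_def by blast
              ultimately show ?thesis by metis
            qed
            ultimately show "a * b \<in> {t \<in> T. \<forall>i<Suc m. t * s i \<in> T}" by blast
          qed
          have "1 * 1 \<in> ext_ideal {t \<in> T. \<forall>i<Suc m. t * s i \<in> T} S"
            by (rule ext_ideal_prod[OF IH D2 SS prod])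
          then show ?case by simp
        qed
        have "{t \<in> T. \<forall>i<n. t * s i \<in> T} \<subseteq> I"
        proof
          fix t assume t: "t \<in> {t \<in> T. \<forall>i<n. t * s i \<in> T}"
          have "smult t p = (\<Sum>i<n. smult (t * s i) (f i))" using h(2) by (simp add: smult_sum_right)
          moreover have "(\<Sum>i<n. smult (t * s i) (f i)) \<in> IntPoly_ext D T"
            by (rule IntPoly_extI) (use t h(1) in blast)
          ultimately show "t \<in> I" using t I_def by simp
        qed
        then show ?thesis using ext_ideal_mono E[of n] by blast
      qed
      then have "1 \<in> I" using C[OF idl] by blast
      then show "p \<in> IntPoly_ext D T" using I_def by simp
    qed
  qed
qed

end
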